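(* Consider the linear time-invariant system $\dot x(t) = Ax(t) + Bu(t) + Ed(t)$, $z(t) = Hx(t)$ with $A\in\mathbb{R}^{n\times n}$, $B\in\mathbb{R}^{n\times m}$, $E\in\mathbb{R}^{n\times \ell}$, $H\in\mathbb{R}^{p\times n}$, under linear state feedback $u(t)=Fx(t)$ with $F\in\mathbb{R}^{m\times n}$. Let $g(t) = He^{(A+BF)t}E$ be the impulse response from $d$ to $z$ and define $\|g\|_{H_2}^2 = \int_0^\infty \mathrm{Tr}(g(\tau)^\top g(\tau))\,d\tau$. Then $\|g\|_{H_2}^2 = 0$ if and only if there exist an integer $k$ and matrices $X\in\mathbb{R}^{k\times k}$, $V\in\mathbb{R}^{n\times k}$ such that $$VX - BFV = AV, \qquad \operatorname{im} E \subseteq \operatorname{im} V \subseteq \ker H.$$ (No internal stability of $A+BF$ is assumed.)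
   Context: $\operatorname{im}$ and $\ker$ denote image and kernel of a matrix. The $H_2$ norm is defined by the (possibly infinite) integral above, without requiring $A+BF$ to be Hurwitz. *)

theory Defs
  imports "HOL-Analysis.Analysis" "Jordan_Normal_Form.Matrix_Kernel"
begin

definition mat_exp :: "real mat \<Rightarrow> real mat" where
  "mat_exp M = mat (dim_row M) (dim_col M)
     (\<lambda>(i,j). \<Sum>k. (M ^\<^sub>m k) $$ (i,j) / fact k)"

definition mat_trace :: "real mat \<Rightarrow> real" where
  "mat_trace M = (\<Sum>i<dim_row M. M $$ (i,i))"

definition mat_image :: "real mat \<Rightarrow> real vec set" where
  "mat_image M = {M *\<^sub>v x | x. x \<in> carrier_vec (dim_col M)}"

definition impulse_response ::
  "real mat \<Rightarrow> real mat \<Rightarrow> real mat \<Rightarrow> real mat \<Rightarrow> real mat \<Rightarrow> real \<Rightarrow> real mat" where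
  "impulse_response A B E H F t = H * mat_exp (t \<cdot>\<^sub>m (A + B * F)) * E"

definition H2_norm_sq :: "(real \<Rightarrow> real mat) \<Rightarrow> ennreal" where
  "H2_norm_sq g = (\<integral>\<^sup>+ t \<in> {0..}. ennreal (mat_trace ((g t)\<^sup>T * g t)) \<partial>lborel)"

end

theory Submission
  imports Defs
begin


definition kry :: "'a::field mat \<Rightarrow> 'a mat \<Rightarrow> nat \<Rightarrow> 'a vec list" where
  "kry M E N = concat (map (\<lambda>i. cols (M ^\<^sub>m i * E)) [0..<N])"

lemma set_kry_Suc: "set (kry M E (Suc N)) = set (kry M E N) \<union> set (cols (M ^\<^sub>m N * E))"
  unfolding kry_def by auto

lemma set_kry: "set (kry M E N) = (\<Union>i<N. set (cols (M ^\<^sub>m i * E)))"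
  unfolding kry_def by auto

lemma cols_carrier_gen: "A \<in> carrier_mat n k \<Longrightarrow> set (cols A) \<subseteq> carrier_vec n"
  unfolding cols_def by auto

lemma kry_carrier:
  assumes M: "M \<in> carrier_mat n n" and E: "E \<in> carrier_mat n l"
  shows "set (kry M E N) \<subseteq> carrier_vec n"
  unfolding set_kry using M E cols_carrier_gen[OF mult_carrier_mat[OF pow_carrier_mat[OF M] E]] by blast

context vec_space begin

lemma krylov_chain:
  assumes M: "M \<in> carrier_mat n n" and E: "E \<in> carrier_mat n l"
    and nP: "\<And>N'. N' < N \<Longrightarrow> \<not> set (cols (M ^\<^sub>m N' * E)) \<subseteq> span (set (kry M E N'))"
  shows "\<exists>T. finite T \<and> T \<subseteq> span (set (kry M E N)) \<and> lin_indpt T \<and> card T = N"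
  using nP
proof (induction N)
  case 0
  show ?case by (intro exI[of _ "{}"]) (auto simp: lin_dep_def)
next
  case (Suc N)
  have kc: "set (kry M E N) \<subseteq> carrier_vec n" "set (kry M E (Suc N)) \<subseteq> carrier_vec n"
    using kry_carrier[OF M E] by blast+
  from Suc.IH Suc.prems obtain T where T: "finite T" "T \<subseteq> span (set (kry M E N))" "lin_indpt T" "card T = N"
    by auto
  from Suc.prems[of N] obtain v where v: "v \<in> set (cols (M ^\<^sub>m N * E))" "v \<notin> span (set (kry M E N))"
    by auto
  have vc: "v \<in> carrier_vec n" using v(1) cols_carrier_gen[OF mult_carrier_mat[OF pow_carrier_mat[OF M] E]] by auto
  have spT: "span (set (kry M E N)) \<subseteq> carrier_vec n" using span_is_subset2[OF kc(1)] by simp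
  have Tc: "T \<subseteq> carrier_vec n" using T(2) spT by auto
  have "span T \<subseteq> span (set (kry M E N))"
    using span_subsetI[OF kc(1) T(2)] .
  hence vT: "v \<notin> span T" using v by auto
  have vT2: "v \<notin> T" using vT in_own_span[of T] Tc by auto
  have li: "lin_indpt (T \<union> {v})" using lin_dep_iff_in_span[of T v] Tc T(3) vc vT2 vT by auto
  have "span (set (kry M E N)) \<subseteq> span (set (kry M E (Suc N)))"
    by (rule span_is_monotone) (auto simp: set_kry_Suc)
  moreover have "v \<in> span (set (kry M E (Suc N)))"
    using in_own_span[OF kc(2)] v(1) by (auto simp: set_kry_Suc)
  ultimately show ?case using T vT2 li
    by (intro exI[of _ "T \<union> {v}"]) auto
qed

lemma krylov_exists:
  assumes M: "M \<in> carrier_mat n n" and E: "E \<in> carrier_mat n l"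
  shows "\<exists>N. set (cols (M ^\<^sub>m N * E)) \<subseteq> span (set (kry M E N))"
proof (rule ccontr)
  assume "\<not> ?thesis"
  then obtain T where T: "finite T" "T \<subseteq> span (set (kry M E (Suc n)))" "lin_indpt T" "card T = Suc n"
    using krylov_chain[OF M E, of "Suc n"] by blast
  have "T \<subseteq> carrier_vec n" using T(2) span_is_subset2[OF kry_carrier[OF M E]] by blast
  then have "card T \<le> dim" using li_le_dim(2)[of T] T by simp
  then show False using T(4) dim_is_n by simp
qed

lemma span_to_image:
  assumes ws: "set ws \<subseteq> carrier_vec n" and v: "v \<in> span (set ws)"
  shows "\<exists>x \<in> carrier_vec (length ws). mat_of_cols n ws *\<^sub>v x = v"
proof -
  have "v \<in> span_list ws" using span_list_as_span[OF ws] v by simp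
  then obtain c where "v = lincomb_list c ws" by (auto elim: in_span_listE)
  also have "\<dots> = mat_of_cols n ws *\<^sub>v vec (length ws) c"
    by (rule lincomb_list_as_mat_mult) (use ws in auto)
  finally show ?thesis by (intro bexI[of _ "vec (length ws) c"]) auto
qed

end

lemma pow_mat_Suc_left:
  assumes M: "M \<in> carrier_mat n n" shows "M * M ^\<^sub>m k = M ^\<^sub>m Suc k"
proof (induction k)
  case 0 then show ?case using M by simp
next
  case (Suc k)
  have "M * M ^\<^sub>m Suc k = (M * M ^\<^sub>m k) * M" using M by (simp add: assoc_mult_mat[symmetric, of M n n _ n M n])
  also have "\<dots> = M ^\<^sub>m Suc (Suc k)" using Suc by simp
  finally show ?case .
qed

lemma cols_col_ex: "v \<in> set (cols A) \<Longrightarrow> \<exists>j < dim_col A. v = col A j"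
  unfolding cols_def by auto

lemma construct_V:
  fixes A B F E H :: "real mat"
  assumes A: "A \<in> carrier_mat n n" and B: "B \<in> carrier_mat n m" and E: "E \<in> carrier_mat n l"
    and H: "H \<in> carrier_mat p n" and F: "F \<in> carrier_mat m n"
    and zero: "\<And>k. H * (A + B * F) ^\<^sub>m k * E = 0\<^sub>m p l"
  shows "\<exists>(k::nat) X V. X \<in> carrier_mat k k \<and> V \<in> carrier_mat n k \<and>
       V * X - B * F * V = A * V \<and>
       mat_image E \<subseteq> mat_image V \<and> mat_image V \<subseteq> mat_kernel H"
proof -
  define M where "M = A + B * F"
  have M: "M \<in> carrier_mat n n" unfolding M_def using A B F by auto
  interpret vec_space "TYPE(real)" n .
  obtain N where N: "set (cols (M ^\<^sub>m N * E)) \<subseteq> span (set (kry M E N))"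
    using krylov_exists[OF M E] by blast
  define ws where "ws = kry M E N"
  define V where "V = mat_of_cols n ws"
  define k where "k = length ws"
  have wsc: "set ws \<subseteq> carrier_vec n" unfolding ws_def by (rule kry_carrier[OF M E])
  have V: "V \<in> carrier_mat n k" unfolding V_def k_def by simp
  have toim: "\<exists>x \<in> carrier_vec k. V *\<^sub>v x = v" if "v \<in> span (set ws)" for v
    using span_to_image[OF wsc that] unfolding V_def k_def .
  have allspan: "set (cols (M ^\<^sub>m i * E)) \<subseteq> span (set ws)" if "i \<le> N" for i
  proof (cases "i = N")
    case True then show ?thesis using N ws_def by simp
  next
    case False
    then have "set (cols (M ^\<^sub>m i * E)) \<subseteq> set ws" using that unfolding ws_def set_kry by (auto intro!: bexI[of _ i])
    then show ?thesis using in_own_span[OF wsc] by blast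
  qed
  have colV: "\<exists>i<N. \<exists>j<l. col V c = col (M ^\<^sub>m i * E) j" if "c < k" for c
  proof -
    have "ws ! c \<in> set ws" using that k_def by simp
    then obtain i where i: "i < N" "ws ! c \<in> set (cols (M ^\<^sub>m i * E))" unfolding ws_def set_kry by auto
    then obtain j where j: "j < l" "ws ! c = col (M ^\<^sub>m i * E) j" using cols_col_ex[OF i(2)] M E by auto
    have "col V c = ws ! c" unfolding V_def using that k_def wsc by (auto intro!: col_mat_of_cols)
    then show ?thesis using i j by auto
  qed
  have "\<exists>x. x \<in> carrier_vec k \<and> V *\<^sub>v x = M *\<^sub>v col V c" if c: "c < k" for c
  proof -
    obtain i j where ij: "i < N" "j < l" "col V c = col (M ^\<^sub>m i * E) j" using colV[OF c] by blast
    have "M *\<^sub>v col V c = col (M * (M ^\<^sub>m i * E)) j"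
      using ij M E by (subst col_mult2[of M n n "M ^\<^sub>m i * E" l j]) auto
    also have "M * (M ^\<^sub>m i * E) = M ^\<^sub>m Suc i * E"
      using M E by (simp add: assoc_mult_mat[symmetric, of M n n _ n E l] pow_mat_Suc_left)
    finally have "M *\<^sub>v col V c \<in> set (cols (M ^\<^sub>m Suc i * E))" using ij M E by (auto simp: cols_def)
    then have "M *\<^sub>v col V c \<in> span (set ws)" using allspan[of "Suc i"] ij by auto
    then show ?thesis using toim by blast
  qed
  then obtain xf where xf: "\<And>c. c < k \<Longrightarrow> xf c \<in> carrier_vec k \<and> V *\<^sub>v xf c = M *\<^sub>v col V c"
    by metis
  define X where "X = mat k k (\<lambda>(a,c). xf c $ a)"
  have X: "X \<in> carrier_mat k k" unfolding X_def by simp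
  have colX: "col X c = xf c" if "c < k" for c
    using xf[OF that] that unfolding X_def by (auto simp: col_def)
  have VX: "V * X = M * V"
  proof (rule eq_matI)
    fix r c assume rc: "r < dim_row (M * V)" "c < dim_col (M * V)"
    then have r: "r < n" and c: "c < k" using M V by auto
    have "(V * X) $$ (r, c) = (V *\<^sub>v col X c) $ r" using V X r c by simp
    also have "\<dots> = (M *\<^sub>v col V c) $ r" using colX[OF c] xf[OF c] by simp
    also have "\<dots> = (M * V) $$ (r, c)" using M V r c by simp
    finally show "(V * X) $$ (r, c) = (M * V) $$ (r, c)" .
  qed (use V X M in auto)
  have eq1: "V * X - B * F * V = A * V"
  proof -
    have "M * V = A * V + B * F * V" unfolding M_def using A B F V
      by (simp add: add_mult_distrib_mat[of A n n "B * F" V k])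
    then show ?thesis using VX A B F V by (intro eq_matI) auto
  qed
  have "\<exists>y. y \<in> carrier_vec k \<and> V *\<^sub>v y = col E j" if j: "j < l" for j
  proof -
    have "col E j \<in> set (cols (M ^\<^sub>m 0 * E))" using j E M by (auto simp: cols_def)
    then have "col E j \<in> span (set ws)" using allspan[of 0] by auto
    then show ?thesis using toim by blast
  qed
  then obtain yf where yf: "\<And>j. j < l \<Longrightarrow> yf j \<in> carrier_vec k \<and> V *\<^sub>v yf j = col E j" by metis
  define Y where "Y = mat k l (\<lambda>(a,j). yf j $ a)"
  have Y: "Y \<in> carrier_mat k l" unfolding Y_def by simp
  have colY: "col Y j = yf j" if "j < l" for j
    using yf[OF that] that unfolding Y_def by (auto simp: col_def)
  have VY: "V * Y = E"
  proof (rule eq_matI)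
    fix r c assume rc: "r < dim_row E" "c < dim_col E"
    then have r: "r < n" and c: "c < l" using E by auto
    have "(V * Y) $$ (r, c) = (V *\<^sub>v col Y c) $ r" using V Y r c by simp
    also have "\<dots> = col E c $ r" using colY[OF c] yf[OF c] by simp
    also have "\<dots> = E $$ (r, c)" using E r c by simp
    finally show "(V * Y) $$ (r, c) = E $$ (r, c)" .
  qed (use V Y E in auto)
  have imE: "mat_image E \<subseteq> mat_image V"
  proof
    fix v assume "v \<in> mat_image E"
    then obtain x where x: "x \<in> carrier_vec l" "v = E *\<^sub>v x" using E unfolding mat_image_def by auto
    have "v = V *\<^sub>v (Y *\<^sub>v x)" using x VY V Y by (metis assoc_mult_mat_vec)
    moreover have "Y *\<^sub>v x \<in> carrier_vec k" using Y by (simp add: carrier_vecI)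
    ultimately show "v \<in> mat_image V" using V unfolding mat_image_def by auto
  qed
  have HV: "H * V = 0\<^sub>m p k"
  proof (rule eq_matI)
    fix r c assume rc: "r < dim_row (0\<^sub>m p k)" "c < dim_col (0\<^sub>m p k :: real mat)"
    then have r: "r < p" and c: "c < k" by auto
    obtain i j where ij: "i < N" "j < l" "col V c = col (M ^\<^sub>m i * E) j" using colV[OF c] by blast
    have "(H * V) $$ (r, c) = (H *\<^sub>v col V c) $ r" using H V r c by simp
    also have "H *\<^sub>v col V c = col (H * (M ^\<^sub>m i * E)) j"
      using ij M E H by (subst col_mult2[of H p n "M ^\<^sub>m i * E" l j]) auto
    also have "H * (M ^\<^sub>m i * E) = 0\<^sub>m p l"
      using zero[of i] M E H unfolding M_def[symmetric]
      by (simp add: assoc_mult_mat[of H p n _ n E l])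
    finally show "(H * V) $$ (r, c) = 0\<^sub>m p k $$ (r, c)" using r c ij by simp
  qed (use H V in auto)
  have imV: "mat_image V \<subseteq> mat_kernel H"
  proof
    fix v assume "v \<in> mat_image V"
    then obtain x where x: "x \<in> carrier_vec k" "v = V *\<^sub>v x" using V unfolding mat_image_def by auto
    have "H *\<^sub>v v = (H * V) *\<^sub>v x" using x H V by simp
    also have "\<dots> = 0\<^sub>v p" using HV x by auto
    finally show "v \<in> mat_kernel H" using H V x unfolding mat_kernel_def by auto
  qed
  show ?thesis using X V eq1 imE imV by blast
qed


lemma col_as_mult: fixes E :: "'a::comm_ring_1 mat" assumes E: "E \<in> carrier_mat n l" and j: "j < l" shows "col E j = E *\<^sub>v unit_vec l j"
proof (rule eq_vecI)
  fix i assume "i < dim_vec (E *\<^sub>v unit_vec l j)"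
  then have i: "i < n" using E by simp
  have "(E *\<^sub>v unit_vec l j) $ i = row E i \<bullet> unit_vec l j" using i E by simp
  also have "\<dots> = row E i $ j" by (rule scalar_prod_right_unit[OF j])
  finally show "col E j $ i = (E *\<^sub>v unit_vec l j) $ i" using i j E by simp
qed (use E in simp)

lemma invariant_zero:
  fixes A B F E H X V :: "real mat"
  assumes A: "A \<in> carrier_mat n n" and B: "B \<in> carrier_mat n m" and E: "E \<in> carrier_mat n l"
    and H: "H \<in> carrier_mat p n" and F: "F \<in> carrier_mat m n"
    and X: "X \<in> carrier_mat k k" and V: "V \<in> carrier_mat n k"
    and eq: "V * X - B * F * V = A * V"
    and imE: "mat_image E \<subseteq> mat_image V" and imV: "mat_image V \<subseteq> mat_kernel H"
  shows "H * (A + B * F) ^\<^sub>m i * E = 0\<^sub>m p l"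
proof -
  define M where "M = A + B * F"
  have M: "M \<in> carrier_mat n n" unfolding M_def using A B F by auto
  have MV: "M * V = V * X"
  proof -
    have "M * V = A * V + B * F * V" unfolding M_def using A B F V
      by (simp add: add_mult_distrib_mat[of A n n "B * F" V k])
    also have "\<dots> = V * X"
    proof (rule eq_matI)
      fix r c assume rc: "r < dim_row (V * X)" "c < dim_col (V * X)"
      then have r: "r < n" and c: "c < k" using V X by auto
      have "(V * X - B * F * V) $$ (r,c) = (A * V) $$ (r,c)" using eq by simp
      then show "(A * V + B * F * V) $$ (r, c) = (V * X) $$ (r, c)"
        using r c A B F V X by simp
    qed (use A B F V X in auto)
    finally show ?thesis .
  qed
  have MiV: "M ^\<^sub>m i * V = V * X ^\<^sub>m i" for i
  proof (induction i)
    case 0 then show ?case using M V X by simp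
  next
    case (Suc i)
    have "M ^\<^sub>m Suc i * V = M ^\<^sub>m i * (M * V)" using M V by (simp add: assoc_mult_mat[of _ n n M n V k])
    also have "\<dots> = (M ^\<^sub>m i * V) * X" using M V X MV by (simp add: assoc_mult_mat[of "M ^\<^sub>m i" n n V k X k])
    also have "\<dots> = V * X ^\<^sub>m Suc i" using Suc V X by (simp add: assoc_mult_mat[of V n k "X ^\<^sub>m i" k X k])
    finally show ?case .
  qed
  have "\<exists>y. y \<in> carrier_vec k \<and> V *\<^sub>v y = col E j" if j: "j < l" for j
  proof -
    have "col E j \<in> mat_image E" unfolding mat_image_def using col_as_mult[OF E j] E by auto
    then have "col E j \<in> mat_image V" using imE by blast
    then show ?thesis unfolding mat_image_def using V by auto
  qed
  then obtain yf where yf: "\<And>j. j < l \<Longrightarrow> yf j \<in> carrier_vec k \<and> V *\<^sub>v yf j = col E j" by metis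
  define Y where "Y = mat k l (\<lambda>(a,j). yf j $ a)"
  have Y: "Y \<in> carrier_mat k l" unfolding Y_def by simp
  have colY: "col Y j = yf j" if "j < l" for j
    using yf[OF that] that unfolding Y_def by (auto simp: col_def)
  have VY: "E = V * Y"
  proof (rule eq_matI)
    fix r c assume rc: "r < dim_row (V * Y)" "c < dim_col (V * Y)"
    then have r: "r < n" and c: "c < l" using V Y by auto
    have "(V * Y) $$ (r, c) = (V *\<^sub>v col Y c) $ r" using V Y r c by simp
    also have "\<dots> = col E c $ r" using colY[OF c] yf[OF c] by simp
    also have "\<dots> = E $$ (r, c)" using E r c by simp
    finally show "E $$ (r, c) = (V * Y) $$ (r, c)" by simp
  qed (use V Y E in auto)
  have HV: "H * V = 0\<^sub>m p k"
  proof (rule eq_matI)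
    fix r c assume rc: "r < dim_row (0\<^sub>m p k)" "c < dim_col (0\<^sub>m p k :: real mat)"
    then have r: "r < p" and c: "c < k" by auto
    have "col V c \<in> mat_image V" unfolding mat_image_def using col_as_mult[OF V c] V by auto
    then have "H *\<^sub>v col V c = 0\<^sub>v p" using imV H unfolding mat_kernel_def by auto
    then show "(H * V) $$ (r, c) = 0\<^sub>m p k $$ (r, c)" using H V r c
      by (metis index_mult_mat_vec index_mult_mat(1) carrier_matD(1) carrier_matD(2) col_dim index_zero_vec(1) index_zero_mat(1) index_mult_mat(2,3) rc)
  qed (use H V in auto)
  have "H * M ^\<^sub>m i * E = H * (M ^\<^sub>m i * V) * Y" unfolding VY using H M V Y
    by (simp add: assoc_mult_mat[of "H * M ^\<^sub>m i" p n V k Y l, symmetric] assoc_mult_mat[of H p n "M ^\<^sub>m i" n V k] mult_carrier_mat[of H p n "M ^\<^sub>m i" n])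
  also have "\<dots> = (H * V) * X ^\<^sub>m i * Y" unfolding MiV using H V X Y by (simp add: assoc_mult_mat[of H p n V k "X ^\<^sub>m i" k, symmetric])
  also have "\<dots> = 0\<^sub>m p l" unfolding HV using X Y by simp
  finally show ?thesis unfolding M_def .
qed



definition ps :: "(nat \<Rightarrow> real) \<Rightarrow> real \<Rightarrow> real" where
  "ps a t = (\<Sum>k. a k / fact k * t ^ k)"

lemma ps_summable:
  fixes a :: "nat \<Rightarrow> real" and y K C :: real
  assumes b: "\<And>k. \<bar>a k\<bar> \<le> K * C ^ k" and C: "C \<ge> 0"
  shows "summable (\<lambda>k. a k / fact k * y ^ k)"
proof (rule summable_comparison_test'[where N=0 and g="\<lambda>k. K * (inverse (fact k) * (C * \<bar>y\<bar>) ^ k)"])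
  show "summable (\<lambda>k. K * (inverse (fact k) * (C * \<bar>y\<bar>) ^ k))"
    by (intro summable_mult summable_exp)
  show "norm (a k / fact k * y ^ k) \<le> K * (inverse (fact k) * (C * \<bar>y\<bar>) ^ k)" for k
  proof -
    have "norm (a k / fact k * y ^ k) = \<bar>a k\<bar> * (inverse (fact k) * \<bar>y\<bar> ^ k)"
      by (simp add: abs_mult power_abs divide_inverse)
    also have "\<dots> \<le> (K * C ^ k) * (inverse (fact k) * \<bar>y\<bar> ^ k)"
      by (rule mult_right_mono[OF b]) simp
    also have "\<dots> = K * (inverse (fact k) * (C * \<bar>y\<bar>) ^ k)"
      by (simp add: power_mult_distrib)
    finally show "norm (a k / fact k * y ^ k) \<le> K * (inverse (fact k) * (C * \<bar>y\<bar>) ^ k)" .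
  qed
qed

lemma ps_deriv:
  fixes a :: "nat \<Rightarrow> real" and K C :: real
  assumes b: "\<And>k. \<bar>a k\<bar> \<le> K * C ^ k" and C: "C \<ge> 0"
  shows "(ps a has_real_derivative ps (\<lambda>k. a (Suc k)) t) (at t)"
proof -
  define c where "c k = a k / fact k" for k
  have "((\<lambda>x. \<Sum>n. c n * x^n) has_field_derivative (\<Sum>n. diffs c n * t^n)) (at t)"
    by (rule termdiffs_strong_converges_everywhere) (use ps_summable[OF b C] in \<open>simp add: c_def\<close>)
  moreover have "(\<lambda>x. \<Sum>n. c n * x^n) = ps a" by (auto simp: ps_def c_def)
  moreover have "diffs c = (\<lambda>k. a (Suc k) / fact k)"
  proof
    fix x
    have "fact (Suc x) = (real (Suc x)) * (fact x :: real)" by (rule fact_Suc)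
    then show "diffs c x = a (Suc x) / fact x"
      unfolding diffs_def c_def by (simp del: of_nat_Suc)
  qed
  ultimately show ?thesis by (simp add: ps_def)
qed

lemma ps_cont:
  fixes a :: "nat \<Rightarrow> real" and K C :: real
  assumes b: "\<And>k. \<bar>a k\<bar> \<le> K * C ^ k" and C: "C \<ge> 0"
  shows "isCont (ps a) t"
  using ps_deriv[OF assms] by (rule DERIV_isCont)

lemma zero_deriv:
  fixes f f' :: "real \<Rightarrow> real"
  assumes d: "\<And>t. (f has_real_derivative f' t) (at t)" and c: "\<And>t. isCont f' t"
    and z: "\<And>t. t \<ge> 0 \<Longrightarrow> f t = 0" and t: "t \<ge> 0"
  shows "f' t = 0"
proof -
  have pos: "f' s = 0" if s: "s > 0" for s
  proof -
    have "((\<lambda>_. 0) has_real_derivative f' s) (at s)"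
      by (rule has_field_derivative_transform_within_open[OF d, of "{0<..}"]) (use s z in auto)
    moreover have "((\<lambda>_. 0) has_real_derivative 0) (at s)" by simp
    ultimately show ?thesis by (rule DERIV_unique)
  qed
  show ?thesis
  proof (cases "t = 0")
    case False then show ?thesis using t pos by simp
  next
    case True
    have "(f' \<longlongrightarrow> f' 0) (at_right 0)" using c[of 0] by (simp add: isCont_def filterlim_at_split)
    moreover have "(f' \<longlongrightarrow> 0) (at_right 0)"
    proof -
      have "\<forall>\<^sub>F x in at_right (0::real). 0 = f' x" using eventually_at_right_less[of "0::real"]
        by eventually_elim (use pos in auto)
      then show ?thesis by (rule Lim_transform_eventually[OF tendsto_const])
    qed
    ultimately show ?thesis using True by (auto dest: tendsto_unique[rotated])
  qed
qed

lemma ps_zero_coeffs: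
  fixes a :: "nat \<Rightarrow> real" and K C :: real
  assumes b: "\<And>k. \<bar>a k\<bar> \<le> K * C ^ k" and C: "C \<ge> 0"
    and z: "\<And>t. t \<ge> 0 \<Longrightarrow> ps a t = 0"
  shows "a j = 0"
proof -
  have "\<forall>t\<ge>0. ps (\<lambda>k. a (k + j)) t = 0"
  proof (induction j)
    case 0 then show ?case using z by simp
  next
    case (Suc j)
    have bj: "\<bar>a (k + j)\<bar> \<le> (K * C ^ j) * C ^ k" for k
      using b[of "k + j"] by (simp add: power_add mult_ac)
    have bj1: "\<bar>a (Suc k + j)\<bar> \<le> (K * C ^ Suc j) * C ^ k" for k
      using b[of "Suc k + j"] by (simp add: power_add mult_ac)
    show ?case
    proof (intro allI impI)
      fix t :: real assume t: "t \<ge> 0"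
      have "ps (\<lambda>k. a (Suc k + j)) t = 0"
        by (rule zero_deriv[where f = "ps (\<lambda>k. a (k + j))"])
           (use ps_deriv[OF bj C] ps_cont[OF bj1 C] Suc.IH t in auto)
      then show "ps (\<lambda>k. a (k + Suc j)) t = 0" by simp
    qed
  qed
  then have "ps (\<lambda>k. a (k + j)) 0 = 0" by simp
  then have "(\<Sum>k. (a (k + j) / fact k) * 0 ^ k) = 0" by (simp only: ps_def)
  then show ?thesis using powser_zero[of "\<lambda>k. a (k + j) / fact k"] by simp
qed


lemma mult_entry:
  fixes A B :: "real mat"
  assumes A: "A \<in> carrier_mat nr n" and B: "B \<in> carrier_mat n nc" and i: "i < nr" and j: "j < nc"
  shows "(A * B) $$ (i, j) = (\<Sum>c<n. A $$ (i, c) * B $$ (c, j))"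
  using A B i j by (simp add: scalar_prod_def atLeast0LessThan)

lemma pow_bound:
  fixes M :: "real mat"
  assumes M: "M \<in> carrier_mat n n" and a: "a < n" and b: "b < n"
  shows "\<bar>(M ^\<^sub>m k) $$ (a, b)\<bar> \<le> (\<Sum>x<n. \<Sum>y<n. \<bar>M $$ (x, y)\<bar>) ^ k"
  using b
proof (induction k arbitrary: b)
  case 0
  then show ?case using a M by (auto simp: one_mat_def)
next
  case (Suc k)
  define C where "C = (\<Sum>x<n. \<Sum>y<n. \<bar>M $$ (x, y)\<bar>)"
  have C0: "C \<ge> 0" unfolding C_def by (intro sum_nonneg) auto
  have col: "(\<Sum>c<n. \<bar>M $$ (c, b)\<bar>) \<le> C" unfolding C_def
    by (intro sum_mono member_le_sum) (use Suc.prems in auto)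
  have "(M ^\<^sub>m Suc k) $$ (a, b) = (\<Sum>c<n. (M ^\<^sub>m k) $$ (a, c) * M $$ (c, b))"
    using mult_entry[of "M ^\<^sub>m k" n n M n a b] M a Suc.prems by simp
  also have "\<bar>\<dots>\<bar> \<le> (\<Sum>c<n. \<bar>(M ^\<^sub>m k) $$ (a, c)\<bar> * \<bar>M $$ (c, b)\<bar>)"
    by (rule order_trans[OF sum_abs]) (simp add: abs_mult)
  also have "\<dots> \<le> (\<Sum>c<n. C ^ k * \<bar>M $$ (c, b)\<bar>)"
    by (intro sum_mono mult_right_mono) (use Suc.IH in \<open>auto simp: C_def\<close>)
  also have "\<dots> = C ^ k * (\<Sum>c<n. \<bar>M $$ (c, b)\<bar>)" by (simp add: sum_distrib_left)
  also have "\<dots> \<le> C ^ k * C" by (rule mult_left_mono[OF col]) (use C0 in simp)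
  finally show ?case by (simp add: C_def mult_ac)
qed

lemma smult_pow:
  fixes M :: "real mat"
  assumes M: "M \<in> carrier_mat n n"
  shows "(t \<cdot>\<^sub>m M) ^\<^sub>m k = t ^ k \<cdot>\<^sub>m M ^\<^sub>m k"
proof (induction k)
  case 0 then show ?case using M by (intro eq_matI) auto
next
  case (Suc k)
  have "(t \<cdot>\<^sub>m M) ^\<^sub>m Suc k = (t ^ k \<cdot>\<^sub>m M ^\<^sub>m k) * (t \<cdot>\<^sub>m M)" using Suc by simp
  also have "\<dots> = t ^ Suc k \<cdot>\<^sub>m (M ^\<^sub>m k * M)"
    using M by (intro eq_matI) (auto simp: mult_entry[of _ n n _ n] sum_distrib_left mult_ac)
  finally show ?case by simp
qed

lemma mat_exp_entry:
  fixes M :: "real mat"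
  assumes M: "M \<in> carrier_mat n n" and a: "a < n" and b: "b < n"
  shows "mat_exp (t \<cdot>\<^sub>m M) $$ (a, b) = (\<Sum>k. (M ^\<^sub>m k) $$ (a, b) / fact k * t ^ k)"
  using M a b by (simp add: mat_exp_def smult_pow[OF M] mult_ac)

lemma triple_entry:
  fixes H Q E :: "real mat"
  assumes H: "H \<in> carrier_mat p n" and Q: "Q \<in> carrier_mat n n" and E: "E \<in> carrier_mat n l"
    and i: "i < p" and j: "j < l"
  shows "(H * Q * E) $$ (i, j) = (\<Sum>b<n. \<Sum>a<n. H $$ (i, a) * Q $$ (a, b) * E $$ (b, j))"
proof -
  have "(H * Q * E) $$ (i, j) = (\<Sum>b<n. (H * Q) $$ (i, b) * E $$ (b, j))"
    using H Q E i j by (intro mult_entry) auto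
  also have "\<dots> = (\<Sum>b<n. (\<Sum>a<n. H $$ (i, a) * Q $$ (a, b)) * E $$ (b, j))"
    by (intro sum.cong refl) (use mult_entry[OF H Q i] in auto)
  finally show ?thesis by (simp add: sum_distrib_right)
qed

definition coef :: "real mat \<Rightarrow> real mat \<Rightarrow> real mat \<Rightarrow> nat \<Rightarrow> nat \<Rightarrow> nat \<Rightarrow> real" where
  "coef H M E i j k = (H * M ^\<^sub>m k * E) $$ (i, j)"

lemma coef_bound:
  fixes H M E :: "real mat"
  assumes H: "H \<in> carrier_mat p n" and M: "M \<in> carrier_mat n n" and E: "E \<in> carrier_mat n l"
    and i: "i < p" and j: "j < l"
  shows "\<bar>coef H M E i j k\<bar> \<le> (\<Sum>b<n. \<Sum>a<n. \<bar>H $$ (i, a)\<bar> * \<bar>E $$ (b, j)\<bar>) * (\<Sum>x<n. \<Sum>y<n. \<bar>M $$ (x, y)\<bar>) ^ k"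
proof -
  define C where "C = (\<Sum>x<n. \<Sum>y<n. \<bar>M $$ (x, y)\<bar>)"
  have "\<bar>coef H M E i j k\<bar> = \<bar>\<Sum>b<n. \<Sum>a<n. H $$ (i, a) * (M ^\<^sub>m k) $$ (a, b) * E $$ (b, j)\<bar>"
    unfolding coef_def using triple_entry[OF H pow_carrier_mat[OF M] E i j] by simp
  also have "\<dots> \<le> (\<Sum>b<n. \<Sum>a<n. \<bar>H $$ (i, a) * (M ^\<^sub>m k) $$ (a, b) * E $$ (b, j)\<bar>)"
    by (rule order_trans[OF sum_abs]) (intro sum_mono sum_abs)
  also have "\<dots> \<le> (\<Sum>b<n. \<Sum>a<n. (\<bar>H $$ (i, a)\<bar> * \<bar>E $$ (b, j)\<bar>) * C ^ k)"
  proof (intro sum_mono)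
    fix b a assume "b \<in> {..<n}" "a \<in> {..<n}"
    then have bnd: "\<bar>(M ^\<^sub>m k) $$ (a, b)\<bar> \<le> C ^ k" unfolding C_def using pow_bound[OF M] by auto
    show "\<bar>H $$ (i, a) * (M ^\<^sub>m k) $$ (a, b) * E $$ (b, j)\<bar> \<le> (\<bar>H $$ (i, a)\<bar> * \<bar>E $$ (b, j)\<bar>) * C ^ k"
      using mult_left_mono[OF bnd, of "\<bar>H $$ (i, a)\<bar> * \<bar>E $$ (b, j)\<bar>"] by (simp add: abs_mult mult_ac)
  qed
  finally show ?thesis by (simp add: C_def sum_distrib_right)
qed

lemma impulse_entry:
  fixes A B E H F :: "real mat"
  assumes A: "A \<in> carrier_mat n n" and B: "B \<in> carrier_mat n m" and E: "E \<in> carrier_mat n l"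
    and H: "H \<in> carrier_mat p n" and F: "F \<in> carrier_mat m n" and i: "i < p" and j: "j < l"
  shows "impulse_response A B E H F t $$ (i, j) = ps (coef H (A + B * F) E i j) t"
proof -
  define M where "M = A + B * F"
  have M: "M \<in> carrier_mat n n" unfolding M_def using A B F by auto
  define C where "C = (\<Sum>x<n. \<Sum>y<n. \<bar>M $$ (x, y)\<bar>)"
  have C0: "C \<ge> 0" unfolding C_def by (intro sum_nonneg) auto
  define s where "s a b k = (M ^\<^sub>m k) $$ (a, b) / fact k * t ^ k" for a b k
  have Ex: "mat_exp (t \<cdot>\<^sub>m M) \<in> carrier_mat n n" using M by (simp add: mat_exp_def)
  have ss: "s a b sums (mat_exp (t \<cdot>\<^sub>m M) $$ (a, b))" if "a < n" "b < n" for a b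
  proof -
    have "summable (s a b)" unfolding s_def
      by (rule ps_summable[where K=1 and C=C]) (use pow_bound[OF M that] C0 in \<open>auto simp: C_def\<close>)
    then show ?thesis using mat_exp_entry[OF M that, of t] unfolding s_def by (simp add: summable_sums)
  qed
  have "(\<lambda>k. \<Sum>b<n. \<Sum>a<n. H $$ (i, a) * s a b k * E $$ (b, j)) sums
        (\<Sum>b<n. \<Sum>a<n. H $$ (i, a) * mat_exp (t \<cdot>\<^sub>m M) $$ (a, b) * E $$ (b, j))"
    by (intro sums_sum sums_mult sums_mult2 ss) auto
  moreover have "(\<lambda>k. \<Sum>b<n. \<Sum>a<n. H $$ (i, a) * s a b k * E $$ (b, j)) =
     (\<lambda>k. coef H M E i j k / fact k * t ^ k)"
  proof
    fix k
    have "coef H M E i j k = (\<Sum>b<n. \<Sum>a<n. H $$ (i, a) * (M ^\<^sub>m k) $$ (a, b) * E $$ (b, j))"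
      unfolding coef_def using triple_entry[OF H pow_carrier_mat[OF M] E i j] by simp
    then have "coef H M E i j k / fact k * t ^ k =
       (\<Sum>b<n. \<Sum>a<n. H $$ (i, a) * (M ^\<^sub>m k) $$ (a, b) * E $$ (b, j) * (t ^ k / fact k))"
      by (simp add: sum_distrib_left divide_inverse mult_ac)
    also have "\<dots> = (\<Sum>b<n. \<Sum>a<n. H $$ (i, a) * s a b k * E $$ (b, j))"
      by (intro sum.cong refl) (simp add: s_def)
    finally show "(\<Sum>b<n. \<Sum>a<n. H $$ (i, a) * s a b k * E $$ (b, j)) = coef H M E i j k / fact k * t ^ k" by simp
  qed
  ultimately have "(\<lambda>k. coef H M E i j k / fact k * t ^ k) sums (H * mat_exp (t \<cdot>\<^sub>m M) * E) $$ (i, j)"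
    using triple_entry[OF H Ex E i j] by simp
  then show ?thesis unfolding impulse_response_def ps_def M_def by (simp add: sums_iff)
qed

lemma trace_entry:
  fixes g :: "real mat"
  assumes g: "g \<in> carrier_mat p l"
  shows "mat_trace (g\<^sup>T * g) = (\<Sum>j<l. \<Sum>i<p. (g $$ (i, j))\<^sup>2)"
  unfolding mat_trace_def using g
  by (intro sum.cong) (auto simp: scalar_prod_def atLeast0LessThan power2_eq_square)

lemma nn_zero_cont:
  fixes f :: "real \<Rightarrow> real"
  assumes c: "\<And>t. isCont f t" and z: "(\<integral>\<^sup>+ t \<in> {0..}. ennreal (f t) \<partial>lborel) = 0"
    and t0: "t0 \<ge> 0" and nn: "\<And>t. f t \<ge> 0"
  shows "f t0 = 0"
proof (rule ccontr)
  assume "f t0 \<noteq> 0"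
  then have pos: "f t0 > 0" using nn[of t0] by simp
  from c[of t0] have "f \<midarrow>t0\<rightarrow> f t0" by (simp add: isCont_def)
  then obtain s where s: "s > 0" and sb: "\<And>x. x \<noteq> t0 \<Longrightarrow> norm (x - t0) < s \<Longrightarrow> norm (f x - f t0) < f t0 / 2"
    using pos unfolding LIM_eq by (meson half_gt_zero)
  have lb: "f x \<ge> f t0 / 2" if "x \<in> {t0..t0 + s/2}" for x
  proof (cases "x = t0")
    case False
    then have "\<bar>f x - f t0\<bar> < f t0 / 2" using that s sb by simp
    then have "- (f x - f t0) < f t0 / 2" using abs_less_iff by blast
    then show ?thesis by linarith
  qed (use pos in auto)
  have "(\<integral>\<^sup>+ t. ennreal (f t0 / 2) * indicator {t0..t0 + s/2} t \<partial>lborel) \<le>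
        (\<integral>\<^sup>+ t \<in> {0..}. ennreal (f t) \<partial>lborel)"
  proof (rule nn_integral_mono)
    fix x
    show "ennreal (f t0 / 2) * indicator {t0..t0 + s/2} x \<le> ennreal (f x) * indicator {0..} x"
    proof (cases "x \<in> {t0..t0 + s/2}")
      case True
      then have "x \<in> {0..}" using t0 by auto
      then show ?thesis using True lb[OF True] by (auto intro: ennreal_leI)
    qed auto
  qed
  moreover have "(\<integral>\<^sup>+ t. ennreal (f t0 / 2) * indicator {t0..t0 + s/2} t \<partial>lborel) = ennreal (f t0 / 2) * ennreal (s/2)"
    using s by (subst nn_integral_cmult_indicator) auto
  moreover have "ennreal (f t0 / 2) * ennreal (s/2) \<noteq> 0" using pos s by (simp add: ennreal_eq_0_iff)
  ultimately show False using z by (simp add: le_zero_eq)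
qed



theorem lemma1:
  fixes A B E H F :: "real mat" and n m l p :: nat
  assumes "A \<in> carrier_mat n n" and "B \<in> carrier_mat n m" and "E \<in> carrier_mat n l"
    and "H \<in> carrier_mat p n" and "F \<in> carrier_mat m n"
  shows "H2_norm_sq (impulse_response A B E H F) = 0 \<longleftrightarrow>
    (\<exists>(k::nat) X V. X \<in> carrier_mat k k \<and> V \<in> carrier_mat n k \<and>
       V * X - B * F * V = A * V \<and>
       mat_image E \<subseteq> mat_image V \<and> mat_image V \<subseteq> mat_kernel H)"
proof -
  note A = assms(1) and B = assms(2) and E = assms(3) and H = assms(4) and F = assms(5)
  define M where "M = A + B * F"
  have M: "M \<in> carrier_mat n n" unfolding M_def using A B F by auto
  have gc: "impulse_response A B E H F t \<in> carrier_mat p l" for t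
    unfolding impulse_response_def using H E M unfolding M_def[symmetric]
    by (auto simp: mat_exp_def intro!: mult_carrier_mat[of _ p n _ l])
  define C where "C = (\<Sum>x<n. \<Sum>y<n. \<bar>M $$ (x, y)\<bar>)"
  have C0: "C \<ge> 0" unfolding C_def by (intro sum_nonneg) auto
  define K where "K i j = (\<Sum>b<n. \<Sum>a<n. \<bar>H $$ (i, a)\<bar> * \<bar>E $$ (b, j)\<bar>)" for i j
  have bnd: "\<And>k. \<bar>coef H M E i j k\<bar> \<le> K i j * C ^ k" if "i < p" "j < l" for i j
    unfolding K_def C_def by (rule coef_bound[OF H M E that])
  define f where "f t = (\<Sum>j<l. \<Sum>i<p. (ps (coef H M E i j) t)\<^sup>2)" for t
  have tr: "mat_trace ((impulse_response A B E H F t)\<^sup>T * impulse_response A B E H F t) = f t" for t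
    unfolding trace_entry[OF gc] f_def M_def
    by (intro sum.cong refl) (simp add: impulse_entry[OF A B E H F])
  have H2eq: "H2_norm_sq (impulse_response A B E H F) = (\<integral>\<^sup>+ t \<in> {0..}. ennreal (f t) \<partial>lborel)"
    unfolding H2_norm_sq_def tr ..
  have pc: "isCont (ps (coef H M E i j)) t" if "i < p" "j < l" for i j t
    using ps_cont[OF bnd[OF that] C0] .
  have cont: "isCont f t" for t
    unfolding f_def by (auto intro!: continuous_intros pc)
  have fnn: "f t \<ge> 0" for t unfolding f_def by (auto intro!: sum_nonneg)
  show ?thesis
  proof
    assume "H2_norm_sq (impulse_response A B E H F) = 0"
    then have z: "(\<integral>\<^sup>+ t \<in> {0..}. ennreal (f t) \<partial>lborel) = 0" using H2eq by simp
    have ps0: "ps (coef H M E i j) t = 0" if "i < p" "j < l" "t \<ge> 0" for i j t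
    proof -
      have "f t = 0" using nn_zero_cont[OF cont z that(3) fnn] .
      then have "\<forall>j\<in>{..<l}. (\<Sum>i<p. (ps (coef H M E i j) t)\<^sup>2) = 0"
        unfolding f_def by (subst (asm) sum_nonneg_eq_0_iff) (auto intro!: sum_nonneg)
      then have "(\<Sum>i<p. (ps (coef H M E i j) t)\<^sup>2) = 0" using that by auto
      then have "\<forall>i\<in>{..<p}. (ps (coef H M E i j) t)\<^sup>2 = 0"
        by (subst (asm) sum_nonneg_eq_0_iff) auto
      then show ?thesis using that by auto
    qed
    have "H * (A + B * F) ^\<^sub>m k * E = 0\<^sub>m p l" for k
    proof (rule eq_matI)
      fix i j assume "i < dim_row (0\<^sub>m p l :: real mat)" "j < dim_col (0\<^sub>m p l :: real mat)"
      then have ij: "i < p" "j < l" by auto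
      have "coef H M E i j k = 0"
        by (rule ps_zero_coeffs[OF bnd[OF ij] C0]) (use ps0 ij in auto)
      then show "(H * (A + B * F) ^\<^sub>m k * E) $$ (i, j) = 0\<^sub>m p l $$ (i, j)"
        using ij unfolding coef_def M_def by simp
    qed (use H M E in \<open>auto simp: M_def[symmetric]\<close>)
    then show "\<exists>(k::nat) X V. X \<in> carrier_mat k k \<and> V \<in> carrier_mat n k \<and>
       V * X - B * F * V = A * V \<and>
       mat_image E \<subseteq> mat_image V \<and> mat_image V \<subseteq> mat_kernel H"
      by (rule construct_V[OF A B E H F])
  next
    assume "\<exists>(k::nat) X V. X \<in> carrier_mat k k \<and> V \<in> carrier_mat n k \<and>
       V * X - B * F * V = A * V \<and>
       mat_image E \<subseteq> mat_image V \<and> mat_image V \<subseteq> mat_kernel H"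
    then obtain k X V where X: "X \<in> carrier_mat k k" and V: "V \<in> carrier_mat n k"
      and eq: "V * X - B * F * V = A * V" and i1: "mat_image E \<subseteq> mat_image V"
      and i2: "mat_image V \<subseteq> mat_kernel H" by blast
    have c0: "coef H M E i j q = 0" if "i < p" "j < l" for i j q
      unfolding coef_def M_def using invariant_zero[OF A B E H F X V eq i1 i2, of q] that by simp
    have "f t = 0" for t unfolding f_def ps_def by (simp add: c0)
    then show "H2_norm_sq (impulse_response A B E H F) = 0" unfolding H2eq by simp
  qed
qed

end
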